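(* Let $\mathbf A$ be a residuated semigroup satisfying $(x/x)y=y(x/x)$ for all $x,y\in A$, and write $1_x:=x/x$. Then for all $x,y\in A$: \[ 1_x\le 1_{xy},\ 1_y\le 1_{xy},\ 1_x\le 1_{x/y},\ 1_y\le 1_{x/y},\ 1_x\le 1_{y\backslash x},\ 1_y\le 1_{y\backslash x}, \] and consequently $1_x1_y\le 1_{xy}$, $1_x1_y\le 1_{x/y}$, $1_x1_y\le 1_{y\backslash x}$.
   Context: A residuated semigroup is a structure $\langle A,\le,\cdot,\backslash,/\rangle$ where $\langle A,\le\rangle$ is a poset, $\langle A,\cdot\rangle$ is a semigroup (we write $xy$ for $x\cdot y$), and for all $x,y,z$: $xy\le z\iff x\le z/y\iff y\le x\backslash z$. *)

theory Defs
  imports Main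
begin

definition residuated_semigroup ::
  "('a \<Rightarrow> 'a \<Rightarrow> bool) \<Rightarrow> ('a \<Rightarrow> 'a \<Rightarrow> 'a) \<Rightarrow> ('a \<Rightarrow> 'a \<Rightarrow> 'a) \<Rightarrow> ('a \<Rightarrow> 'a \<Rightarrow> 'a) \<Rightarrow> bool"
where
  "residuated_semigroup le m ld rd \<longleftrightarrow>
     class.order le (\<lambda>x y. le x y \<and> x \<noteq> y) \<and>
     (\<forall>x y z. m (m x y) z = m x (m y z)) \<and>
     (\<forall>x y z. (le (m x y) z \<longleftrightarrow> le x (rd z y)) \<and> (le (m x y) z \<longleftrightarrow> le y (ld x z)))"

end

theory Submission
  imports Defs
begin

theorem lemma3p3:
  fixes le :: "'a \<Rightarrow> 'a \<Rightarrow> bool" and m ld rd :: "'a \<Rightarrow> 'a \<Rightarrow> 'a"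
  assumes "residuated_semigroup le m ld rd"
    and "\<forall>x y. m (rd x x) y = m y (rd x x)"
  shows "\<forall>x y.
     le (rd x x) (rd (m x y) (m x y)) \<and>
     le (rd y y) (rd (m x y) (m x y)) \<and>
     le (rd x x) (rd (rd x y) (rd x y)) \<and>
     le (rd y y) (rd (rd x y) (rd x y)) \<and>
     le (rd x x) (rd (ld y x) (ld y x)) \<and>
     le (rd y y) (rd (ld y x) (ld y x)) \<and>
     le (m (rd x x) (rd y y)) (rd (m x y) (m x y)) \<and>
     le (m (rd x x) (rd y y)) (rd (rd x y) (rd x y)) \<and>
     le (m (rd x x) (rd y y)) (rd (ld y x) (ld y x))"
  proof -
  have ord: "class.order le (\<lambda>x y. le x y \<and> x \<noteq> y)"
   and as: "\<And>x y z. m (m x y) z = m x (m y z)"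
   and r1: "\<And>x y z. le (m x y) z \<longleftrightarrow> le x (rd z y)"
   and r2: "\<And>x y z. le (m x y) z \<longleftrightarrow> le y (ld x z)"
    using assms(1) unfolding residuated_semigroup_def by blast+
  have cm: "\<And>x y. m (rd x x) y = m y (rd x x)" using assms(2) by blast
  have refl: "\<And>x. le x x" using ord by (simp add: class.order_def class.preorder_def)
  have tr: "\<And>x y z. le x y \<Longrightarrow> le y z \<Longrightarrow> le x z"
    using ord unfolding class.order_def class.preorder_def by blast
  have monr: "\<And>a b y. le a b \<Longrightarrow> le (m a y) (m b y)"
    using r1 refl tr by metis
  have monl: "\<And>a b y. le a b \<Longrightarrow> le (m y a) (m y b)"
    using r2 refl tr by metis
  have u: "\<And>x. le (m (rd x x) x) x" using r1 refl by blast
  have rdx: "\<And>x y. le (m (rd x y) y) x" using r1 refl by blast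
  have ldx: "\<And>x y. le (m y (ld y x)) x" using r2 refl by blast
  have mul: "\<And>a b z. le a (rd z z) \<Longrightarrow> le b (rd z z) \<Longrightarrow> le (m a b) (rd z z)"
  proof -
    fix a b z assume a: "le a (rd z z)" and b: "le b (rd z z)"
    have "le (m (m a b) z) z"
    proof -
      have "m (m a b) z = m a (m b z)" by (rule as)
      moreover have "le (m a (m b z)) (m a z)" using monl r1 b by blast
      moreover have "le (m a z) z" using r1 a by blast
      ultimately show ?thesis using tr by metis
    qed
    thus "le (m a b) (rd z z)" using r1 by blast
  qed
  show ?thesis
  proof (intro allI)
    fix x y
    have 1: "le (rd x x) (rd (m x y) (m x y))"
    proof -
      have "le (m (m (rd x x) x) y) (m x y)" using monr u by blast
      thus ?thesis using r1 as by metis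
    qed
    have 2: "le (rd y y) (rd (m x y) (m x y))"
    proof -
      have "m (rd y y) (m x y) = m x (m (rd y y) y)" using as cm by metis
      moreover have "le (m x (m (rd y y) y)) (m x y)" using monl u by blast
      ultimately show ?thesis using r1 by metis
    qed
    have 3: "le (rd x x) (rd (rd x y) (rd x y))"
    proof -
      have "le (m (rd x x) (m (rd x y) y)) (m (rd x x) x)" using monl rdx by blast
      hence "le (m (m (rd x x) (rd x y)) y) x" using as u tr by metis
      hence "le (m (rd x x) (rd x y)) (rd x y)" using r1 by blast
      thus ?thesis using r1 by blast
    qed
    have 4: "le (rd y y) (rd (rd x y) (rd x y))"
    proof -
      have "m (m (rd y y) (rd x y)) y = m (rd x y) (m (rd y y) y)" using as cm by metis
      moreover have "le (m (rd x y) (m (rd y y) y)) (m (rd x y) y)" using monl u by blast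
      ultimately have "le (m (m (rd y y) (rd x y)) y) x" using rdx tr by metis
      hence "le (m (rd y y) (rd x y)) (rd x y)" using r1 by blast
      thus ?thesis using r1 by blast
    qed
    have 5: "le (rd x x) (rd (ld y x) (ld y x))"
    proof -
      have "m y (m (rd x x) (ld y x)) = m (rd x x) (m y (ld y x))" using as cm by metis
      moreover have "le (m (rd x x) (m y (ld y x))) (m (rd x x) x)" using monl ldx by blast
      ultimately have "le (m y (m (rd x x) (ld y x))) x" using u tr by metis
      hence "le (m (rd x x) (ld y x)) (ld y x)" using r2 by blast
      thus ?thesis using r1 by blast
    qed
    have 6: "le (rd y y) (rd (ld y x) (ld y x))"
    proof -
      have "m y (m (rd y y) (ld y x)) = m (m (rd y y) y) (ld y x)" using as cm by metis
      moreover have "le (m (m (rd y y) y) (ld y x)) (m y (ld y x))" using monr u by blast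
      ultimately have "le (m y (m (rd y y) (ld y x))) x" using ldx tr by metis
      hence "le (m (rd y y) (ld y x)) (ld y x)" using r2 by blast
      thus ?thesis using r1 by blast
    qed
    show "le (rd x x) (rd (m x y) (m x y)) \<and>
     le (rd y y) (rd (m x y) (m x y)) \<and>
     le (rd x x) (rd (rd x y) (rd x y)) \<and>
     le (rd y y) (rd (rd x y) (rd x y)) \<and>
     le (rd x x) (rd (ld y x) (ld y x)) \<and>
     le (rd y y) (rd (ld y x) (ld y x)) \<and>
     le (m (rd x x) (rd y y)) (rd (m x y) (m x y)) \<and>
     le (m (rd x x) (rd y y)) (rd (rd x y) (rd x y)) \<and>
     le (m (rd x x) (rd y y)) (rd (ld y x) (ld y x))"
      using 1 2 3 4 5 6 mul by blast
  qed
qed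

end
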